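(* Let $(X,d,W)$ be a UCW-hyperbolic space with monotone modulus of uniform convexity $\eta$, $C\subseteq X$ nonempty and convex, $\mu\ge1$, and $T:C\to C$ satisfying condition $(E_\mu)$. Let $L\in\mathbb{N}$, $L\ge2$, $(\lambda_n)\subseteq[1/L,1-1/L]$, $x\in C$ and $x_0=x$, $x_{n+1}=(1-\lambda_n)x_n+\lambda_nTx_n$. Let $b>0$ be such that for every $\gamma>0$ there exists $p\in C$ with $d(x,p)\le b$ and $d(p,Tp)\le\gamma$. Then for every $k\in\mathbb{N}$ and $g:\mathbb{N}\to\mathbb{N}$ there exists $N\le\Phi^+$ such that $d(x_m,Tx_m)\le\frac1{k+1}$ for all $m\in[N,N+g(N)]$, where $\Phi^+=h^{(M)}(0)$ is the $M$-fold iterate of $h(n)=g(n)+n+1$ applied to $0$, $M=\lceil3(b+1)/\theta\rceil$ and $\theta=\frac1{4(k+1)L^2}\eta\left(b+1,\frac1{4(k+1)(b+1)}\right)$. If moreover $\eta(r,\varepsilon)\ge\varepsilon\cdot\tilde\eta(r,\varepsilon)$ with $\tilde\eta$ increasing in $\varepsilon$, the same holds with $\eta$ replaced by $\tilde\eta$ in the definition of $\theta$.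
   Context: A $W$-hyperbolic space is a metric space $(X,d)$ with $W:X\times X\times[0,1]\to X$, writing $(1-\lambda)x+\lambda y:=W(x,y,\lambda)$, such that for all $x,y,z,w\in X$, $\lambda,\tilde\lambda\in[0,1]$: $d(z,W(x,y,\lambda))\le(1-\lambda)d(z,x)+\lambda d(z,y)$; $d(W(x,y,\lambda),W(x,y,\tilde\lambda))=|\lambda-\tilde\lambda|d(x,y)$; $W(x,y,\lambda)=W(y,x,1-\lambda)$; $d(W(x,z,\lambda),W(y,w,\lambda))\le(1-\lambda)d(x,y)+\lambda d(z,w)$. It is uniformly convex with modulus $\eta:(0,\infty)\times(0,2]\to(0,1]$ if for all $r>0$, $\varepsilon\in(0,2]$, $a,x,y\in X$: $d(x,a)\le r$, $d(y,a)\le r$, $d(x,y)\ge\varepsilon r$ imply $d(\frac12x+\frac12y,a)\le(1-\eta(r,\varepsilon))r$. It is UCW-hyperbolic if this holds with $\eta$ monotone, i.e. nonincreasing in the first argument. $C$ is convex if $W(x,y,\lambda)\in C$ for $x,y\in C$. $T$ satisfies condition $(E_\mu)$ if $d(x,Ty)\le\mu d(Tx,x)+d(x,y)$ for all $x,y\in C$. *)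

theory Defs
  imports "HOL-Analysis.Analysis"
begin

text \<open>A W-hyperbolic space: the metric space is the type 'a (with its dist),
  W x y l stands for (1-l)x + l y.\<close>
definition W_hyperbolic :: "('a::metric_space \<Rightarrow> 'a \<Rightarrow> real \<Rightarrow> 'a) \<Rightarrow> bool" where
  "W_hyperbolic W \<longleftrightarrow>
    (\<forall>x y z w l l'. 0 \<le> l \<and> l \<le> 1 \<and> 0 \<le> l' \<and> l' \<le> 1 \<longrightarrow>
       dist z (W x y l) \<le> (1 - l) * dist z x + l * dist z y \<and>
       dist (W x y l) (W x y l') = \<bar>l - l'\<bar> * dist x y \<and>
       W x y l = W y x (1 - l) \<and>
       dist (W x z l) (W y w l) \<le> (1 - l) * dist x y + l * dist z w)"

definition uc_modulus :: "('a::metric_space \<Rightarrow> 'a \<Rightarrow> real \<Rightarrow> 'a) \<Rightarrow> (real \<Rightarrow> real \<Rightarrow> real) \<Rightarrow> bool" where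
  "uc_modulus W \<eta> \<longleftrightarrow>
    (\<forall>r e. 0 < r \<and> 0 < e \<and> e \<le> 2 \<longrightarrow> 0 < \<eta> r e \<and> \<eta> r e \<le> 1) \<and>
    (\<forall>r e a x y. 0 < r \<and> 0 < e \<and> e \<le> 2 \<and> dist x a \<le> r \<and> dist y a \<le> r \<and> dist x y \<ge> e * r
       \<longrightarrow> dist (W x y (1/2)) a \<le> (1 - \<eta> r e) * r)"

definition monotone_modulus :: "(real \<Rightarrow> real \<Rightarrow> real) \<Rightarrow> bool" where
  "monotone_modulus \<eta> \<longleftrightarrow>
    (\<forall>r s e. 0 < r \<and> r \<le> s \<and> 0 < e \<and> e \<le> 2 \<longrightarrow> \<eta> s e \<le> \<eta> r e)"

definition UCW_hyperbolic :: "('a::metric_space \<Rightarrow> 'a \<Rightarrow> real \<Rightarrow> 'a) \<Rightarrow> (real \<Rightarrow> real \<Rightarrow> real) \<Rightarrow> bool" where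
  "UCW_hyperbolic W \<eta> \<longleftrightarrow> W_hyperbolic W \<and> uc_modulus W \<eta> \<and> monotone_modulus \<eta>"

definition W_convex :: "('a \<Rightarrow> 'a \<Rightarrow> real \<Rightarrow> 'a) \<Rightarrow> 'a set \<Rightarrow> bool" where
  "W_convex W C \<longleftrightarrow> (\<forall>x\<in>C. \<forall>y\<in>C. \<forall>l. 0 \<le> l \<and> l \<le> 1 \<longrightarrow> W x y l \<in> C)"

definition condition_E :: "real \<Rightarrow> 'a::metric_space set \<Rightarrow> ('a \<Rightarrow> 'a) \<Rightarrow> bool" where
  "condition_E \<mu> C T \<longleftrightarrow> (\<forall>x\<in>C. \<forall>y\<in>C. dist x (T y) \<le> \<mu> * dist (T x) x + dist x y)"

primrec KM_iter :: "('a \<Rightarrow> 'a \<Rightarrow> real \<Rightarrow> 'a) \<Rightarrow> ('a \<Rightarrow> 'a) \<Rightarrow> (nat \<Rightarrow> real) \<Rightarrow> 'a \<Rightarrow> nat \<Rightarrow> 'a" where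
  "KM_iter W T lam x 0 = x"
| "KM_iter W T lam x (Suc n) = W (KM_iter W T lam x n) (T (KM_iter W T lam x n)) (lam n)"

definition theta_rate :: "(real \<Rightarrow> real \<Rightarrow> real) \<Rightarrow> nat \<Rightarrow> real \<Rightarrow> nat \<Rightarrow> real" where
  "theta_rate \<eta> L b k =
     1 / (4 * (real k + 1) * (real L)^2) * \<eta> (b + 1) (1 / (4 * (real k + 1) * (b + 1)))"

definition M_rate :: "(real \<Rightarrow> real \<Rightarrow> real) \<Rightarrow> nat \<Rightarrow> real \<Rightarrow> nat \<Rightarrow> nat" where
  "M_rate \<eta> L b k = nat \<lceil>3 * (b + 1) / theta_rate \<eta> L b k\<rceil>"

definition Phi_plus :: "(real \<Rightarrow> real \<Rightarrow> real) \<Rightarrow> nat \<Rightarrow> real \<Rightarrow> nat \<Rightarrow> (nat \<Rightarrow> nat) \<Rightarrow> nat" where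
  "Phi_plus \<eta> L b k g = ((\<lambda>n. g n + n + 1) ^^ M_rate \<eta> L b k) 0"

end

theory Submission imports Defs begin

lemma Wax:
  assumes "W_hyperbolic W" "0\<le>l" "l\<le>1" "0\<le>l'" "l'\<le>1"
  shows "dist z (W x y l) \<le> (1 - l) * dist z x + l * dist z y"
    "dist (W x y l) (W x y l') = \<bar>l - l'\<bar> * dist x y"
    "W x y l = W y x (1 - l)"
    "dist (W x z l) (W y w l) \<le> (1 - l) * dist x y + l * dist z w"
  using assms unfolding W_hyperbolic_def by blast+

lemma W0: assumes "W_hyperbolic W" shows "W x y 0 = x"
proof -
  have "dist x (W x y 0) \<le> (1 - 0) * dist x x + 0 * dist x y"
    using Wax(1)[OF assms, of 0 0 x x y] by simp
  thus ?thesis by simp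
qed

lemma W1: assumes "W_hyperbolic W" shows "W x y 1 = y"
  using Wax(3)[OF assms, of 1 0 x y] W0[OF assms] by simp

lemma dist_W_left: assumes "W_hyperbolic W" "0\<le>l" "l\<le>1"
  shows "dist x (W x y l) = l * dist x y"
  using Wax(2)[OF assms(1,2,3), of 0 x y] W0[OF assms(1)] assms by (simp add: dist_commute)

lemma dist_W_right: assumes "W_hyperbolic W" "0\<le>l" "l\<le>1"
  shows "dist (W x y l) y = (1 - l) * dist x y"
  using Wax(2)[OF assms(1,2,3), of 1 x y] W1[OF assms(1)] assms by simp

lemma uniq:
  fixes W :: "'a::metric_space \<Rightarrow> 'a \<Rightarrow> real \<Rightarrow> 'a"
    and x y z z' :: 'a
  assumes Wh: "W_hyperbolic W" and uc: "uc_modulus W \<eta>"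
    and t: "0 \<le> t" "t \<le> 1"
    and z: "dist x z = t * dist x y" "dist z y = (1 - t) * dist x y"
    and z': "dist x z' = t * dist x y" "dist z' y = (1 - t) * dist x y"
  shows "z = z'"
proof (rule ccontr)
  assume ne: "z \<noteq> z'"
  define D where "D = dist x y"
  define r where "r = t * D"
  have r0: "r \<noteq> 0"
  proof
    assume "r = 0"
    then have "z = x" "z' = x" using z z' by (auto simp: r_def D_def)
    with ne show False by simp
  qed
  have "r \<ge> 0" using t by (simp add: r_def D_def)
  with r0 have rpos: "r > 0" by simp
  define d where "d = dist z z'"
  have dpos: "d > 0" using ne by (simp add: d_def)
  have "d \<le> dist z x + dist x z'" unfolding d_def by (rule dist_triangle)
  hence d2: "d \<le> 2 * r" using z z' by (simp add: dist_commute r_def D_def)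
  define e where "e = d / r"
  have e: "0 < e" "e \<le> 2" using dpos rpos d2 by (auto simp: e_def field_simps)
  have er: "e * r = d" using rpos by (simp add: e_def)
  have uc2: "\<forall>r e a x y. 0 < r \<and> 0 < e \<and> e \<le> 2 \<and> dist x a \<le> r \<and> dist y a \<le> r \<and> dist x y \<ge> e * r
       \<longrightarrow> dist (W x y (1/2)) a \<le> (1 - \<eta> r e) * r"
    and uc1: "\<forall>r e. 0 < r \<and> 0 < e \<and> e \<le> 2 \<longrightarrow> 0 < \<eta> r e \<and> \<eta> r e \<le> 1"
    using uc unfolding uc_modulus_def by blast+
  define w where "w = W z z' (1/2)"
  have "dist w x \<le> (1 - \<eta> r e) * r"
    using uc2[rule_format, of r e z x z'] rpos e er z z'
    by (simp add: w_def dist_commute r_def D_def d_def)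
  moreover have "\<eta> r e > 0" using uc1 rpos e by blast
  moreover have "(1 - \<eta> r e) * r = r - \<eta> r e * r" by (simp add: algebra_simps)
  moreover have "\<eta> r e * r > 0" using calculation(2) rpos by simp
  ultimately have wx: "dist w x < r" by linarith
  have "dist y w \<le> (1 - 1/2) * dist y z + 1/2 * dist y z'"
    using Wax(1)[OF Wh, of "1/2" 0 y z z'] by (simp add: w_def)
  hence wy: "dist w y \<le> (1 - t) * D" using z z' by (simp add: dist_commute D_def)
  have "D \<le> dist x w + dist w y" unfolding D_def by (rule dist_triangle)
  with wx wy show False by (simp add: dist_commute r_def algebra_simps)
qed

lemma comp:
  fixes W :: "'a::metric_space \<Rightarrow> 'a \<Rightarrow> real \<Rightarrow> 'a" and u v :: 'a
  assumes Wh: "W_hyperbolic W" and uc: "uc_modulus W \<eta>"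
    and l: "0 \<le> l" "l \<le> 1/2"
  shows "W u v l = W u (W u v (1/2)) (2*l)"
proof (rule uniq[OF Wh uc, of l u _ v])
  define m where "m = W u v (1/2)"
  define D where "D = dist u v"
  have um: "dist u m = D/2" using dist_W_left[OF Wh, of "1/2" u v] by (simp add: m_def D_def)
  have mv: "dist m v = D/2" using dist_W_right[OF Wh, of "1/2" u v] by (simp add: m_def D_def)
  show "0 \<le> l" "l \<le> 1" using l by auto
  show "dist u (W u v l) = l * dist u v" using dist_W_left[OF Wh, of l u v] l by simp
  show "dist (W u v l) v = (1 - l) * dist u v" using dist_W_right[OF Wh, of l u v] l by simp
  have a: "dist u (W u m (2*l)) = l * D" using dist_W_left[OF Wh, of "2*l" u m] l um by simp
  thus "dist u (W u (W u v (1/2)) (2*l)) = l * dist u v" by (simp add: m_def D_def)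
  have b: "dist (W u m (2*l)) m = (1 - 2*l) * (D/2)" using dist_W_right[OF Wh, of "2*l" u m] l um by simp
  have "dist (W u m (2*l)) v \<le> dist (W u m (2*l)) m + dist m v" by (rule dist_triangle)
  hence up: "dist (W u m (2*l)) v \<le> (1 - l) * D" using b mv by (simp add: algebra_simps)
  have "D \<le> dist u (W u m (2*l)) + dist (W u m (2*l)) v" unfolding D_def by (rule dist_triangle)
  hence "dist (W u m (2*l)) v \<ge> (1 - l) * D" using a by (simp add: algebra_simps)
  with up show "dist (W u (W u v (1/2)) (2*l)) v = (1 - l) * dist u v" by (simp add: m_def D_def)
qed

lemma ucl0:
  fixes W :: "'a::metric_space \<Rightarrow> 'a \<Rightarrow> real \<Rightarrow> 'a" and u v a :: 'a
  assumes Wh: "W_hyperbolic W" and uc: "uc_modulus W \<eta>"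
    and l: "0 \<le> l" "l \<le> 1/2" "c \<le> l"
    and s: "0 < s" and e: "0 < e" "e \<le> 2"
    and d: "dist u a \<le> s" "dist v a \<le> s" "dist u v \<ge> e * s"
  shows "dist (W u v l) a \<le> s - 2 * c * \<eta> s e * s"
proof -
  have uc2: "\<forall>r e a x y. 0 < r \<and> 0 < e \<and> e \<le> 2 \<and> dist x a \<le> r \<and> dist y a \<le> r \<and> dist x y \<ge> e * r
       \<longrightarrow> dist (W x y (1/2)) a \<le> (1 - \<eta> r e) * r"
    and uc1: "\<forall>r e. 0 < r \<and> 0 < e \<and> e \<le> 2 \<longrightarrow> 0 < \<eta> r e \<and> \<eta> r e \<le> 1"
    using uc unfolding uc_modulus_def by blast+
  define m where "m = W u v (1/2)"
  have ma: "dist a m \<le> (1 - \<eta> s e) * s"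
    using uc2[rule_format, of s e u a v] s e d by (simp add: m_def dist_commute)
  have eta: "\<eta> s e > 0" using uc1 s e by blast
  have "dist a (W u m (2*l)) \<le> (1 - 2*l) * dist a u + (2*l) * dist a m"
    using Wax(1)[OF Wh, of "2*l" 0 a u m] l by simp
  also have "\<dots> \<le> (1 - 2*l) * s + (2*l) * ((1 - \<eta> s e) * s)"
    apply (rule add_mono; rule mult_left_mono)
    using l d ma by (auto simp: dist_commute)
  also have "\<dots> = s - 2 * l * \<eta> s e * s" by (simp add: algebra_simps)
  also have "\<dots> \<le> s - 2 * c * \<eta> s e * s"
    using l eta s by (simp add: mult_right_mono)
  finally show ?thesis using comp[OF Wh uc l(1,2), of u v] by (simp add: m_def dist_commute)
qed

lemma ucl:
  fixes W :: "'a::metric_space \<Rightarrow> 'a \<Rightarrow> real \<Rightarrow> 'a" and u v a :: 'a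
  assumes Wh: "W_hyperbolic W" and uc: "uc_modulus W \<eta>"
    and l: "c \<le> l" "l \<le> 1 - c" "0 \<le> c"
    and s: "0 < s" and e: "0 < e" "e \<le> 2"
    and d: "dist u a \<le> s" "dist v a \<le> s" "dist u v \<ge> e * s"
  shows "dist (W u v l) a \<le> s - 2 * c * \<eta> s e * s"
proof (cases "l \<le> 1/2")
  case True
  then show ?thesis using ucl0[OF Wh uc _ True l(1) s e d] l by simp
next
  case False
  have "W u v l = W v u (1 - l)" using Wax(3)[OF Wh, of l 0] False l by simp
  moreover have "dist (W v u (1-l)) a \<le> s - 2 * c * \<eta> s e * s"
    using ucl0[OF Wh uc _ _ _ s e d(2,1)] False l d(3) by (simp add: dist_commute)
  ultimately show ?thesis by simp
qed


lemma drift: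
  fixes D :: "nat \<Rightarrow> real"
  assumes "\<forall>n. D (Suc n) \<le> D n + \<delta>" "n \<le> n'"
  shows "D n' \<le> D n + \<delta> * (real n' - real n)"
  using assms(2)
proof (induction n' rule: dec_induct)
  case base then show ?case by simp
next
  case (step k)
  then show ?case using assms(1)[rule_format, of k] by (simp add: algebra_simps)
qed

lemma counting:
  fixes D :: "nat \<Rightarrow> real" and P :: "nat \<Rightarrow> bool" and g :: "nat \<Rightarrow> nat"
  assumes th: "\<theta> > 0" and b: "b \<ge> 0" and M: "real M * \<theta> \<ge> 3 * (b + 1)"
    and Phi: "Phi = ((\<lambda>n. g n + n + 1) ^^ M) 0"
    and dl: "\<delta> \<ge> 0" "\<delta> * real Phi \<le> 1/2"
    and D0: "D 0 \<le> b" and Dnn: "\<forall>n. D n \<ge> 0"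
    and Dstep: "\<forall>n. D (Suc n) \<le> D n + \<delta>"
    and Dbad: "\<forall>n. \<not> P n \<and> D n \<le> b + 1/2 \<longrightarrow> D (Suc n) \<le> D n + \<delta> - 4 * \<theta>"
  shows "\<exists>N \<le> Phi. \<forall>m\<in>{N..N + g N}. P m"
proof (rule ccontr)
  assume nex: "\<not> ?thesis"
  define N where "N j = ((\<lambda>n. g n + n + 1) ^^ j) 0" for j
  have NS: "N (Suc j) = g (N j) + N j + 1" for j by (simp add: N_def)
  have Nmono: "N j \<le> N j'" if "j \<le> j'" for j j'
    using that
  proof (induction j' rule: dec_induct)
    case base then show ?case by simp
  next
    case (step k) then show ?case using NS[of k] by simp
  qed
  have NM: "N M = Phi" by (simp add: N_def Phi)
  have Dle: "D n \<le> b + 1/2" if "n \<le> Phi" for n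
  proof -
    have "D n \<le> D 0 + \<delta> * (real n - real 0)" using drift[OF Dstep, of 0 n] by simp
    also have "\<delta> * real n \<le> \<delta> * real Phi" using that dl by (simp add: mult_left_mono)
    ultimately show ?thesis using D0 dl by simp
  qed
  have claim: "D (N j) \<le> b + \<delta> * real (N j) - 4 * \<theta> * real j" if "j \<le> M" for j
    using that
  proof (induction j)
    case 0 then show ?case using D0 by (simp add: N_def)
  next
    case (Suc j)
    have jM: "j < M" using Suc by simp
    have "N j \<le> Phi" using Nmono[of j M] jM NM by simp
    then obtain m where m: "m \<in> {N j..N j + g (N j)}" "\<not> P m" using nex by blast
    have mlt: "m < N (Suc j)" using m NS[of j] by simp
    have "N (Suc j) \<le> Phi" using Nmono[of "Suc j" M] jM NM by simp
    hence "m \<le> Phi" using mlt by simp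
    hence b1: "D (Suc m) \<le> D m + \<delta> - 4 * \<theta>" using Dbad Dle m(2) by blast
    have b2: "D m \<le> D (N j) + \<delta> * (real m - real (N j))" using drift[OF Dstep, of "N j" m] m by simp
    have b3: "D (N (Suc j)) \<le> D (Suc m) + \<delta> * (real (N (Suc j)) - real (Suc m))"
      using drift[OF Dstep, of "Suc m" "N (Suc j)"] mlt by simp
    have ih: "D (N j) \<le> b + \<delta> * real (N j) - 4 * \<theta> * real j" using Suc jM by simp
    show ?case using b1 b2 b3 ih by (simp add: algebra_simps)
  qed
  have "D Phi \<le> b + \<delta> * real Phi - 4 * \<theta> * real M" using claim[of M] NM by simp
  moreover have "4 * \<theta> * real M \<ge> 12 * (b + 1)" using M by (simp add: algebra_simps)
  ultimately have "D Phi < 0" using dl b by simp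
  with Dnn show False by (metis not_le)
qed


lemma KM_in_C:
  assumes C_conv: "W_convex W C" and T_C: "\<forall>y\<in>C. T y \<in> C" and x: "x \<in> C"
    and lam: "\<forall>n. 0 \<le> lam n \<and> lam n \<le> 1"
  shows "KM_iter W T lam x n \<in> C"
  by (induction n) (use assms in \<open>auto simp: W_convex_def\<close>)

lemma core:
  fixes W :: "'a::metric_space \<Rightarrow> 'a \<Rightarrow> real \<Rightarrow> 'a"
    and \<eta> :: "real \<Rightarrow> real \<Rightarrow> real"
    and C :: "'a set" and T :: "'a \<Rightarrow> 'a" and \<mu> :: real
    and L :: nat and lam :: "nat \<Rightarrow> real" and x :: 'a and b :: real
    and k :: nat and g :: "nat \<Rightarrow> nat"
  assumes Wh: "W_hyperbolic W" and uc: "uc_modulus W \<eta>"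
    and C_conv: "W_convex W C"
    and mu: "\<mu> \<ge> 1"
    and T_C: "\<forall>y\<in>C. T y \<in> C"
    and E: "condition_E \<mu> C T"
    and L: "L \<ge> 2"
    and lam: "\<forall>n. 1 / real L \<le> lam n \<and> lam n \<le> 1 - 1 / real L"
    and x: "x \<in> C"
    and b: "b > 0"
    and approx: "\<forall>\<gamma>>0. \<exists>p\<in>C. dist x p \<le> b \<and> dist p (T p) \<le> \<gamma>"
    and th: "\<theta> > 0"
    and key: "\<forall>s. 0 < s \<and> s \<le> b + 1 \<and> 1 / (real k + 1) < 2 * s \<longrightarrow>
       (\<exists>e. 0 < e \<and> e \<le> 2 \<and> e * s \<le> 1 / (real k + 1) \<and> 4 * \<theta> \<le> 2 * (1 / real L) * \<eta> s e * s)"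
  shows "\<exists>N \<le> ((\<lambda>n. g n + n + 1) ^^ nat \<lceil>3 * (b + 1) / \<theta>\<rceil>) 0.
            \<forall>m\<in>{N..N + g N}. dist (KM_iter W T lam x m) (T (KM_iter W T lam x m)) \<le> 1 / (real k + 1)"
proof -
  define M where "M = nat \<lceil>3 * (b + 1) / \<theta>\<rceil>"
  define Phi where "Phi = ((\<lambda>n. g n + n + 1) ^^ M) 0"
  define \<delta> :: real where "\<delta> = 1 / (2 * (real Phi + 1))"
  define \<epsilon> :: real where "\<epsilon> = 1 / (real k + 1)"
  have dpos: "\<delta> > 0" by (simp add: \<delta>_def)
  have dhalf: "\<delta> \<le> 1/2" by (simp add: \<delta>_def field_simps)
  have dPhi: "\<delta> * real Phi \<le> 1/2" by (simp add: \<delta>_def field_simps)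
  obtain p where p: "p \<in> C" "dist x p \<le> b" "dist p (T p) \<le> \<delta> / \<mu>"
  proof -
    have "\<delta> / \<mu> > 0" using dpos mu by simp
    then show ?thesis using approx that by blast
  qed
  have Lpos: "real L > 0" using L by simp
  have lam01: "\<forall>n. 0 \<le> lam n \<and> lam n \<le> 1"
  proof
    fix n
    have "1 / real L \<ge> 0" by simp
    thus "0 \<le> lam n \<and> lam n \<le> 1" using lam[rule_format, of n] by linarith
  qed
  define xs where "xs n = KM_iter W T lam x n" for n
  have xsC: "xs n \<in> C" for n unfolding xs_def by (rule KM_in_C[OF C_conv T_C x lam01])
  have Tp: "dist p (T y) \<le> \<delta> + dist p y" if "y \<in> C" for y
  proof -
    have "dist p (T y) \<le> \<mu> * dist (T p) p + dist p y" using E p(1) that unfolding condition_E_def by blast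
    moreover have "\<mu> * dist (T p) p \<le> \<delta>" using p(3) mu
      by (simp add: dist_commute field_simps)
    ultimately show ?thesis by simp
  qed
  define D where "D n = dist (xs n) p" for n
  have xsS: "xs (Suc n) = W (xs n) (T (xs n)) (lam n)" for n by (simp add: xs_def)
  have Dstep: "\<forall>n. D (Suc n) \<le> D n + \<delta>"
  proof
    fix n
    have l: "0 \<le> lam n" "lam n \<le> 1" using lam01 by auto
    have "dist p (xs (Suc n)) \<le> (1 - lam n) * dist p (xs n) + lam n * dist p (T (xs n))"
      using Wax(1)[OF Wh l, of 0] xsS by simp
    also have "\<dots> \<le> (1 - lam n) * dist p (xs n) + lam n * (\<delta> + dist p (xs n))"
      using Tp[OF xsC[of n]] l by (simp add: mult_left_mono)
    also have "\<dots> = dist p (xs n) + lam n * \<delta>" by (simp add: algebra_simps)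
    also have "\<dots> \<le> dist p (xs n) + \<delta>" using l dpos by (simp add: mult_left_le_one_le)
    finally show "D (Suc n) \<le> D n + \<delta>" by (simp add: D_def dist_commute)
  qed
  have Dbad: "\<forall>n. \<not> dist (xs n) (T (xs n)) \<le> \<epsilon> \<and> D n \<le> b + 1/2 \<longrightarrow> D (Suc n) \<le> D n + \<delta> - 4 * \<theta>"
  proof (intro allI impI, elim conjE)
    fix n
    assume bad: "\<not> dist (xs n) (T (xs n)) \<le> \<epsilon>" and Dn: "D n \<le> b + 1/2"
    define s where "s = D n + \<delta>"
    have s0: "s > 0" using dpos by (simp add: s_def D_def add_nonneg_pos)
    have sb: "s \<le> b + 1" using Dn dhalf by (simp add: s_def)
    have vs: "dist (T (xs n)) p \<le> s" using Tp[OF xsC[of n]] by (simp add: s_def D_def dist_commute)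
    have us: "dist (xs n) p \<le> s" using dpos by (simp add: s_def D_def)
    have "dist (xs n) (T (xs n)) \<le> dist (xs n) p + dist p (T (xs n))" by (rule dist_triangle)
    hence "dist (xs n) (T (xs n)) \<le> 2 * s" using us vs by (simp add: dist_commute)
    hence e2s: "\<epsilon> < 2 * s" using bad by simp
    obtain e where e: "0 < e" "e \<le> 2" "e * s \<le> \<epsilon>" "4 * \<theta> \<le> 2 * (1 / real L) * \<eta> s e * s"
      using key[rule_format, of s] s0 sb e2s by (auto simp: \<epsilon>_def)
    have duv: "dist (xs n) (T (xs n)) \<ge> e * s" using e(3) bad by simp
    have "dist (W (xs n) (T (xs n)) (lam n)) p \<le> s - 2 * (1 / real L) * \<eta> s e * s"
      apply (rule ucl[OF Wh uc _ _ _ s0 e(1,2) us vs duv])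
      using lam by auto
    thus "D (Suc n) \<le> D n + \<delta> - 4 * \<theta>" using e(4) xsS by (simp add: D_def s_def)
  qed
  have Mth: "real M * \<theta> \<ge> 3 * (b + 1)"
  proof -
    have "real M \<ge> 3 * (b + 1) / \<theta>" unfolding M_def by linarith
    thus ?thesis using th by (simp add: field_simps)
  qed
  have "\<exists>N \<le> Phi. \<forall>m\<in>{N..N + g N}. dist (xs m) (T (xs m)) \<le> \<epsilon>"
    apply (rule counting[OF th _ Mth Phi_def _ dPhi, of D])
    using b dpos p(2) Dstep Dbad by (auto simp: D_def dist_commute xs_def)
  thus ?thesis unfolding xs_def \<epsilon>_def Phi_def M_def by blast
qed

theorem theorem7p15:
  fixes W :: "'a::metric_space \<Rightarrow> 'a \<Rightarrow> real \<Rightarrow> 'a"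
    and \<eta> :: "real \<Rightarrow> real \<Rightarrow> real"
    and C :: "'a set" and T :: "'a \<Rightarrow> 'a" and \<mu> :: real
    and L :: nat and lam :: "nat \<Rightarrow> real" and x :: 'a and b :: real
  assumes ucw: "UCW_hyperbolic W \<eta>"
    and C_ne: "C \<noteq> {}" and C_conv: "W_convex W C"
    and mu: "\<mu> \<ge> 1"
    and T_C: "\<forall>y\<in>C. T y \<in> C"
    and E: "condition_E \<mu> C T"
    and L: "L \<ge> 2"
    and lam: "\<forall>n. 1 / real L \<le> lam n \<and> lam n \<le> 1 - 1 / real L"
    and x: "x \<in> C"
    and b: "b > 0"
    and approx: "\<forall>\<gamma>>0. \<exists>p\<in>C. dist x p \<le> b \<and> dist p (T p) \<le> \<gamma>"
  shows "(\<forall>(k::nat) (g::nat \<Rightarrow> nat). \<exists>N \<le> Phi_plus \<eta> L b k g.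
            \<forall>m\<in>{N..N + g N}. dist (KM_iter W T lam x m) (T (KM_iter W T lam x m)) \<le> 1 / (real k + 1))
       \<and> (\<forall>\<eta>' :: real \<Rightarrow> real \<Rightarrow> real.
            (\<forall>r e. 0 < r \<and> 0 < e \<and> e \<le> 2 \<longrightarrow> 0 < \<eta>' r e \<and> e * \<eta>' r e \<le> \<eta> r e) \<and>
            (\<forall>r e e'. 0 < r \<and> 0 < e \<and> e \<le> e' \<and> e' \<le> 2 \<longrightarrow> \<eta>' r e \<le> \<eta>' r e')
            \<longrightarrow> (\<forall>(k::nat) (g::nat \<Rightarrow> nat). \<exists>N \<le> Phi_plus \<eta>' L b k g.
                 \<forall>m\<in>{N..N + g N}. dist (KM_iter W T lam x m) (T (KM_iter W T lam x m)) \<le> 1 / (real k + 1)))"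
proof -
  have Wh: "W_hyperbolic W" and uc: "uc_modulus W \<eta>" and mono: "monotone_modulus \<eta>"
    using ucw unfolding UCW_hyperbolic_def by auto
  have uc1: "\<forall>r e. 0 < r \<and> 0 < e \<and> e \<le> 2 \<longrightarrow> 0 < \<eta> r e \<and> \<eta> r e \<le> 1"
    using uc unfolding uc_modulus_def by blast
  have mono': "\<eta> s e \<ge> \<eta> r e" if "0 < s" "s \<le> r" "0 < e" "e \<le> 2" for r s e
    using mono that unfolding monotone_modulus_def by blast
  have Lge: "real L \<ge> 2" using L by simp
  have Lsq: "1 / (real L)^2 \<le> 1 / (2 * real L)"
    using Lge by (simp add: field_simps power2_eq_square)
  have Lsq1: "1 / (real L)^2 \<le> 1 / real L"
    using Lge by (simp add: field_simps power2_eq_square)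
  define e where "e k = 1 / (4 * (real k + 1) * (b + 1))" for k :: nat
  have e: "0 < e k" "e k \<le> 2" for k
  proof -
    have "1 * 1 \<le> (real k + 1) * (b + 1)" using b by (intro mult_mono) auto
    hence h: "1 \<le> 4 * ((real k + 1) * (b + 1))" by linarith
    have "e k = 1 / (4 * ((real k + 1) * (b + 1)))" by (simp add: e_def mult.assoc)
    moreover have "0 < 1 / (4 * ((real k + 1) * (b + 1)))" using h by (intro divide_pos_pos) auto
    moreover have "1 / (4 * ((real k + 1) * (b + 1))) \<le> 1" using h by (simp add: divide_le_eq_1)
    ultimately show "0 < e k" "e k \<le> 2" by linarith+
  qed
  have ek: "e k * (b + 1) = 1 / (4 * (real k + 1))" for k using b by (simp add: e_def)
  have part1: "\<exists>N \<le> Phi_plus \<eta> L b k g.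
            \<forall>m\<in>{N..N + g N}. dist (KM_iter W T lam x m) (T (KM_iter W T lam x m)) \<le> 1 / (real k + 1)"
    for k g
  proof -
    define \<eta>0 where "\<eta>0 = \<eta> (b + 1) (e k)"
    have e0: "\<eta>0 > 0" using uc1 e[of k] b unfolding \<eta>0_def by auto
    have th: "theta_rate \<eta> L b k = 1 / (real k + 1) * \<eta>0 / (4 * (real L)^2)"
      by (simp add: theta_rate_def \<eta>0_def e_def)
    have thpos: "theta_rate \<eta> L b k > 0" unfolding th using e0 L by simp
    show ?thesis unfolding Phi_plus_def M_rate_def
    proof (rule core[OF Wh uc C_conv mu T_C E L lam x b approx thpos]; intro allI impI; elim conjE)
      fix s assume s0: "0 < s" and sb: "s \<le> b + 1" and s2: "1 / (real k + 1) < 2 * s"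
      have es: "e k * s \<le> 1 / (real k + 1)"
      proof -
        have "e k * s \<le> e k * (b + 1)" using sb e[of k] by simp
        also have "\<dots> \<le> 1 / (real k + 1)" unfolding ek by (simp add: field_simps)
        finally show ?thesis .
      qed
      have me: "\<eta> s (e k) \<ge> \<eta>0" unfolding \<eta>0_def using mono'[OF s0 sb e] .
      have "4 * theta_rate \<eta> L b k = (1 / (real k + 1)) * \<eta>0 * (1 / (real L)^2)"
        unfolding th by simp
      also have "\<dots> \<le> (1 / (real k + 1)) * \<eta>0 * (1 / real L)"
        by (rule mult_left_mono[OF Lsq1]) (use e0 in simp)
      also have "\<dots> \<le> (2 * s) * \<eta>0 * (1 / real L)"
        by (intro mult_right_mono) (use s2 e0 in auto)
      also have "\<dots> \<le> (2 * s) * \<eta> s (e k) * (1 / real L)"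
        by (intro mult_right_mono mult_left_mono) (use me s0 in auto)
      also have "\<dots> = 2 * (1 / real L) * \<eta> s (e k) * s" by (simp add: algebra_simps)
      finally show "\<exists>e. 0 < e \<and> e \<le> 2 \<and> e * s \<le> 1 / (real k + 1) \<and>
          4 * theta_rate \<eta> L b k \<le> 2 * (1 / real L) * \<eta> s e * s"
        using e[of k] es by blast
    qed
  qed
  have part2: "\<exists>N \<le> Phi_plus \<eta>' L b k g.
            \<forall>m\<in>{N..N + g N}. dist (KM_iter W T lam x m) (T (KM_iter W T lam x m)) \<le> 1 / (real k + 1)"
    if h1: "\<forall>r e. 0 < r \<and> 0 < e \<and> e \<le> 2 \<longrightarrow> 0 < \<eta>' r e \<and> e * \<eta>' r e \<le> \<eta> r e"
      and h2: "\<forall>r e e'. 0 < r \<and> 0 < e \<and> e \<le> e' \<and> e' \<le> 2 \<longrightarrow> \<eta>' r e \<le> \<eta>' r e'"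
    for \<eta>' :: "real \<Rightarrow> real \<Rightarrow> real" and k g
  proof -
    define \<eta>0 where "\<eta>0 = \<eta>' (b + 1) (e k)"
    have e0: "\<eta>0 > 0" using h1 e[of k] b unfolding \<eta>0_def by auto
    have th: "theta_rate \<eta>' L b k = 1 / (real k + 1) * \<eta>0 / (4 * (real L)^2)"
      by (simp add: theta_rate_def \<eta>0_def e_def)
    have thpos: "theta_rate \<eta>' L b k > 0" unfolding th using e0 L by simp
    show ?thesis unfolding Phi_plus_def M_rate_def
    proof (rule core[OF Wh uc C_conv mu T_C E L lam x b approx thpos]; intro allI impI; elim conjE)
      fix s assume s0: "0 < s" and sb: "s \<le> b + 1" and s2: "1 / (real k + 1) < 2 * s"
      define es where "es = 1 / (4 * (real k + 1) * s)"
      have es0: "0 < es" using s0 by (simp add: es_def)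
      have es2: "es \<le> 2"
      proof -
        have "1 / (real k + 1) \<le> 8 * s" using s2 s0 by linarith
        thus ?thesis using s0 by (simp add: es_def field_simps)
      qed
      have ess: "es * s = 1 / (4 * (real k + 1))" using s0 by (simp add: es_def)
      have ess': "es * s \<le> 1 / (real k + 1)" unfolding ess by (simp add: field_simps)
      have ees: "e k \<le> es" using s0 sb b unfolding e_def es_def
        by (simp add: frac_le)
      have "\<eta> s es \<ge> \<eta> (b + 1) es" using mono'[OF s0 sb es0 es2] .
      moreover have "\<eta> (b + 1) es \<ge> es * \<eta>' (b + 1) es" using h1 b es0 es2 by auto
      moreover have "\<eta>' (b + 1) es \<ge> \<eta>0" unfolding \<eta>0_def using h2 b e[of k] ees es2 by auto
      moreover have "es * \<eta>0 \<le> es * \<eta>' (b + 1) es"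
        using calculation(3) es0 by (intro mult_left_mono) auto
      ultimately have me: "\<eta> s es \<ge> es * \<eta>0" by linarith
      have "4 * theta_rate \<eta>' L b k = (1 / (real k + 1)) * \<eta>0 * (1 / (real L)^2)"
        unfolding th by simp
      also have "\<dots> \<le> (1 / (real k + 1)) * \<eta>0 * (1 / (2 * real L))"
        by (rule mult_left_mono[OF Lsq]) (use e0 in simp)
      also have "\<dots> = 2 * (1 / real L) * (es * \<eta>0) * s"
      proof -
        have "2 * (1 / real L) * (es * \<eta>0) * s = 2 * (1 / real L) * \<eta>0 * (es * s)"
          by (simp add: algebra_simps)
        also have "\<dots> = 2 * (1 / real L) * \<eta>0 * (1 / (4 * (real k + 1)))" by (simp only: ess)
        also have "\<dots> = (1 / (real k + 1)) * \<eta>0 * (1 / (2 * real L))"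
        proof -
          have gen: "2 * (1 / A) * c * (1 / (4 * B)) = (1 / B) * c * (1 / (2 * A))"
            if "A > 0" "B > 0" for A B c :: real using that by (simp add: field_simps)
          show ?thesis by (rule gen) (use Lge in auto)
        qed
        finally show ?thesis by simp
      qed
      also have "\<dots> \<le> 2 * (1 / real L) * \<eta> s es * s"
        by (intro mult_right_mono mult_left_mono) (use me s0 in auto)
      finally show "\<exists>e. 0 < e \<and> e \<le> 2 \<and> e * s \<le> 1 / (real k + 1) \<and>
          4 * theta_rate \<eta>' L b k \<le> 2 * (1 / real L) * \<eta> s e * s"
        using es0 es2 ess' by blast
    qed
  qed
  show ?thesis using part1 part2 by blast
qed

end
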